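(* Let $n\ge 1$ and let $\mathcal{M}^n$ denote the set of real symmetric positive semidefinite $n\times n$ matrices. Let $F:(\mathcal{M}^n)^n\to\mathbb{R}$ be a function such that (i) $F(A_1,\dots,A_n)\ge 0$ for all $A_1,\dots,A_n\in\mathcal{M}^n$; (ii) $F$ is additive in each variable, i.e. $F(\dots,A+A',\dots)=F(\dots,A,\dots)+F(\dots,A',\dots)$ in each argument, the other arguments being fixed; (iii) $F(A_1,\dots,A_n)=0$ whenever two of the arguments $A_i,A_j$ ($i\neq j$) are proportional matrices of rank one. Then there is a constant $a\ge 0$ such that $F(A_1,\dots,A_n)=a\,D(A_1,\dots,A_n)$ for all $A_1,\dots,A_n\in\mathcal{M}^n$, where $D$ is the mixed discriminant.
   Context: The mixed discriminant $D:(\mathcal{M}^n)^n\to\mathbb{R}$ is the unique symmetric function such that $\det(\lambda_1A_1+\dots+\lambda_mA_m)=\sum_{i_1,\dots,i_n=1}^m\lambda_{i_1}\cdots\lambda_{i_n}D(A_{i_1},\dots,A_{i_n})$ for all $m\in\mathbb{N}$, $A_1,\dots,A_m\in\mathcal{M}^n$ and $\lambda_1,\dots,\lambda_m\ge 0$. Equivalently, $D(A_1,\dots,A_n)=\frac{1}{n!}\sum_{\sigma\in S(n)}\det(A_{\sigma(1)}^{(1)},\dots,A_{\sigma(n)}^{(n)})$, where $A^{(i)}$ denotes the $i$th column of $A$ and $S(n)$ is the symmetric group. *)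

theory Defs
  imports "HOL-Analysis.Analysis"
begin

definition psd :: "real^'n^'n \<Rightarrow> bool" where
  "psd A \<longleftrightarrow> transpose A = A \<and> (\<forall>x. 0 \<le> x \<bullet> (A *v x))"

text \<open>Mixed discriminant via the permutation formula: column j of the matrix
  is the j-th column of A (sigma j).\<close>
definition mixed_discr :: "('n::finite \<Rightarrow> real^'n^'n) \<Rightarrow> real" where
  "mixed_discr A = (1 / fact CARD('n)) *
     (\<Sum>\<sigma> | \<sigma> permutes (UNIV::'n set). det (\<chi> i j. A (\<sigma> j) $ i $ j))"

end

theory Submission
  imports Defs
begin



definition out :: "real^'n \<Rightarrow> real^'n^'n" where
  "out x = (\<chi> i j. x$i * x$j)"

lemma out_mult_vec: "out x *v y = (x \<bullet> y) *\<^sub>R x"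
  by (simp add: out_def matrix_vector_mult_def inner_vec_def vec_eq_iff sum_distrib_left sum_distrib_right mult_ac)

lemma psd_out: "psd (out x)"
  unfolding psd_def
proof (intro conjI allI)
  show "transpose (out x) = out x" by (auto simp: out_def transpose_def vec_eq_iff mult.commute)
  fix y :: "real^'a"
  show "0 \<le> y \<bullet> (out x *v y)" by (simp add: out_mult_vec inner_commute)
qed

lemma psd_add: "psd A \<Longrightarrow> psd B \<Longrightarrow> psd (A + B)"
  unfolding psd_def
  by (auto simp: transpose_def vec_eq_iff matrix_vector_mult_add_rdistrib inner_add_right add_nonneg_nonneg)

lemma psd_zero: "psd 0"
  unfolding psd_def by (auto simp: transpose_def vec_eq_iff matrix_vector_mult_def inner_vec_def)

lemma psd_scale: "psd A \<Longrightarrow> 0 \<le> c \<Longrightarrow> psd (c *\<^sub>R A)"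
  unfolding psd_def
  by (auto simp: transpose_scalar scaleR_matrix_vector_assoc[symmetric])

lemma out_scale: "out (c *\<^sub>R x) = (c^2) *\<^sub>R out x"
  by (simp add: out_def vec_eq_iff power2_eq_square)

lemma out_zero: "out 0 = 0"
  by (simp add: out_def vec_eq_iff)

lemma out_neg: "out (- x) = out x"
  by (simp add: out_def vec_eq_iff)

lemma rank_out: fixes x :: "real^'n" assumes "x \<noteq> 0" shows "rank (out x) = 1"
proof -
  define C :: "real^1^'n" where "C = (\<chi> i j. x$i)"
  define R :: "real^'n^1" where "R = (\<chi> i j. x$j)"
  have "out x = C ** R"
    by (simp add: out_def C_def R_def matrix_matrix_mult_def vec_eq_iff)
  then have "rank (out x) \<le> rank R" by (simp add: rank_mul_le_right)
  also have "\<dots> \<le> 1" using rank_bound[of R] by simp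
  finally have le: "rank (out x) \<le> 1" .
  obtain i where "x$i \<noteq> 0" using assms by (auto simp: vec_eq_iff)
  then have "out x \<noteq> 0" by (auto simp: out_def vec_eq_iff)
  then have "rank (out x) \<noteq> 0" by (simp add: rank_eq_0)
  with le show ?thesis by simp
qed




lemma additive_nonneg_linear:
  fixes g :: "real \<Rightarrow> real"
  assumes add: "\<And>s t. 0 \<le> s \<Longrightarrow> 0 \<le> t \<Longrightarrow> g (s + t) = g s + g t"
    and nn: "\<And>s. 0 \<le> s \<Longrightarrow> 0 \<le> g s"
    and s: "0 \<le> s"
  shows "g s = s * g 1"
proof -
  have g0: "g 0 = 0" using add[of 0 0] by simp
  have mult: "g (real k * t) = real k * g t" if "0 \<le> t" for k t
  proof (induction k)
    case 0 then show ?case using g0 by simp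
  next
    case (Suc k)
    have "g (real (Suc k) * t) = g (real k * t + t)" by (simp add: algebra_simps)
    also have "\<dots> = g (real k * t) + g t" using that by (intro add) auto
    finally show ?case using Suc by (simp add: algebra_simps)
  qed
  have bound: "\<bar>real N * (g s - s * g 1)\<bar> \<le> g 1" if "N \<ge> 1" for N :: nat
  proof -
    define k where "k = nat \<lfloor>real N * s\<rfloor>"
    define r where "r = real N * s - real k"
    have Ns: "0 \<le> real N * s" using s by simp
    have r0: "0 \<le> r" and r1: "r < 1" using Ns unfolding r_def k_def
      by (auto simp: of_nat_nat) linarith+
    have "g (real N * s) = real N * g s" using mult s by simp
    moreover have "g (real N * s) = g (real k * 1 + r)" by (simp add: r_def)
    moreover have "g (real k * 1 + r) = real k * g 1 + g r"
      using add[of "real k * 1" r] mult[of 1 k] r0 by simp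
    moreover have "g 1 = g r + g (1 - r)" using add[of r "1 - r"] r0 r1 by simp
    moreover have "0 \<le> g r" "0 \<le> g (1 - r)" using nn r0 r1 by auto
    ultimately have "real N * (g s - s * g 1) = g r - r * g 1"
      by (simp add: r_def algebra_simps)
    moreover have "0 \<le> g 1" using nn by simp
    moreover have "r * g 1 \<le> g 1" using r0 r1 \<open>0 \<le> g 1\<close> by (simp add: mult_left_le_one_le)
    moreover have "0 \<le> r * g 1" using r0 \<open>0 \<le> g 1\<close> by simp
    ultimately show ?thesis using \<open>0 \<le> g r\<close> \<open>g 1 = g r + g (1 - r)\<close> \<open>0 \<le> g (1 - r)\<close> by auto
  qed
  show ?thesis
  proof (rule ccontr)
    assume "g s \<noteq> s * g 1"
    then have e: "\<bar>g s - s * g 1\<bar> > 0" by simp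
    obtain N :: nat where N: "g 1 / \<bar>g s - s * g 1\<bar> < real N" using reals_Archimedean2 by blast
    have "N \<ge> 1"
    proof (rule ccontr)
      assume "\<not> N \<ge> 1" then have "N = 0" by simp
      with N have "g 1 / \<bar>g s - s * g 1\<bar> < 0" by simp
      moreover have "0 \<le> g 1" using nn by simp
      ultimately show False using e by (simp add: divide_less_0_iff)
    qed
    from N e have "g 1 < real N * \<bar>g s - s * g 1\<bar>" by (simp add: divide_less_eq mult.commute)
    with bound[OF \<open>N \<ge> 1\<close>] show False by (simp add: abs_mult)
  qed
qed

locale Fctx =
  fixes F :: "('n::finite \<Rightarrow> real^'n^'n) \<Rightarrow> real"
  assumes nonneg: "\<And>A. (\<forall>i. psd (A i)) \<Longrightarrow> 0 \<le> F A"
    and additive: "\<And>A i B B'. (\<forall>k. psd (A k)) \<Longrightarrow> psd B \<Longrightarrow> psd B' \<Longrightarrow>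
        F (A(i := B + B')) = F (A(i := B)) + F (A(i := B'))"
    and vanish: "\<And>A i j c. (\<forall>k. psd (A k)) \<Longrightarrow> i \<noteq> j \<Longrightarrow> rank (A i) = 1 \<Longrightarrow>
        rank (A j) = 1 \<Longrightarrow> A i = c *\<^sub>R A j \<Longrightarrow> F A = 0"
begin

lemma F_zero: assumes "\<forall>k. psd (A k)" shows "F (A(i := 0)) = 0"
  using additive[OF assms psd_zero psd_zero, of i] by simp

lemma F_homog:
  assumes A: "\<forall>k. psd (A k)" and M: "psd M" and s: "0 \<le> s"
  shows "F (A(i := s *\<^sub>R M)) = s * F (A(i := M))"
proof -
  define g where "g t = F (A(i := t *\<^sub>R M))" for t
  have "g s = s * g 1"
  proof (rule additive_nonneg_linear[OF _ _ s])
    fix a b :: real assume "0 \<le> a" "0 \<le> b"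
    then show "g (a + b) = g a + g b"
      unfolding g_def scaleR_add_left using additive[OF A psd_scale[OF M] psd_scale[OF M]] by simp
  next
    fix a :: real assume "0 \<le> a"
    then show "0 \<le> g a" unfolding g_def using A psd_scale[OF M] by (intro nonneg) auto
  qed
  then show ?thesis by (simp add: g_def)
qed

end



lemma seq_lin:
  fixes q :: "nat \<Rightarrow> real"
  assumes "\<And>k. q (k + 2) + q k = 2 * q (k + 1)"
  shows "q k = q 0 + real k * (q 1 - q 0)"
proof -
  have "q k = q 0 + real k * (q 1 - q 0) \<and> q (k+1) = q 0 + real (k+1) * (q 1 - q 0)"
  proof (induction k)
    case 0 then show ?case by simp
  next
    case (Suc k)
    have "q (k + 2) = 2 * q (k + 1) - q k" using assms[of k] by simp
    with Suc show ?case by (simp add: algebra_simps)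
  qed
  then show ?thesis by simp
qed

lemma nonneg_lin:
  fixes c d :: real
  assumes "\<And>k::nat. 0 \<le> c + real k * d"
  shows "0 \<le> d"
proof (rule ccontr)
  assume "\<not> 0 \<le> d"
  then have d: "d < 0" by simp
  obtain k :: nat where "c / (- d) < real k" using reals_Archimedean2 by blast
  then have "c / (- d) * (- d) < real k * (- d)"
    by (rule mult_strict_right_mono) (use d in auto)
  then have "c < real k * (- d)" using d by simp
  with assms[of k] show False by (simp add: algebra_simps)
qed

lemma jensen_const:
  fixes p :: "real \<Rightarrow> real"
  assumes nn: "\<And>s. 0 \<le> p s" and J: "\<And>s t. p (s + t) + p (s - t) = 2 * p s"
  shows "p 1 = p 0"
proof -
  have a: "p (real k) = p 0 + real k * (p 1 - p 0)" for k
    using seq_lin[of "\<lambda>k. p (real k)"] J[of "real _ + 1" 1] by (simp add: algebra_simps)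
  have b: "p (- real k) = p 0 + real k * (p (-1) - p 0)" for k
  proof -
    have "p (- real (k + 2)) + p (- real k) = 2 * p (- real (k + 1))" for k
    proof -
      have e1: "- real (k+1) + 1 = - real k" and e2: "- real (k+1) - 1 = - real (k+2)"
        by simp_all
      have "p (- real (k+1) + 1) + p (- real (k+1) - 1) = 2 * p (- real (k+1))"
        by (rule J)
      then have "p (- real k) + p (- real (k+2)) = 2 * p (- real (k+1))"
        unfolding e1 e2 .
      then show ?thesis by linarith
    qed
    from seq_lin[of "\<lambda>k. p (- real k)", OF this] show ?thesis by simp
  qed
  have ab: "p 1 + p (-1) = 2 * p 0" using J[of 0 1] by simp
  have "0 \<le> p 0 + real k * (p 1 - p 0)" for k using a[of k] nn[of "real k"] by simp
  then have "0 \<le> p 1 - p 0" by (rule nonneg_lin)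
  moreover have "0 \<le> p 0 + real k * (p (-1) - p 0)" for k using b[of k] nn[of "- real k"] by simp
  then have "0 \<le> p (-1) - p 0" by (rule nonneg_lin)
  ultimately show ?thesis using ab by simp
qed

lemma out_jensen_identity:
  "out (x + (s + t) *\<^sub>R y) + out (x + (s - t) *\<^sub>R y) =
   (out (x + s *\<^sub>R y) + out (x + s *\<^sub>R y)) + (out (t *\<^sub>R y) + out (t *\<^sub>R y))"
  by (simp add: out_scale power_mult_distrib) (simp add: out_def vec_eq_iff algebra_simps power2_eq_square)

context Fctx begin

definition fv :: "('n \<Rightarrow> real^'n) \<Rightarrow> real" where
  "fv v = F (\<lambda>k. out (v k))"

lemma allpsd_out: "\<forall>k. psd (out (v k))" by (simp add: psd_out)

lemma F_out_parallel:
  assumes A: "\<forall>k. psd (A k)" and Aj: "A j = out y" and ij: "i \<noteq> j"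
  shows "F (A(i := out (c *\<^sub>R y))) = 0"
proof (cases "c = 0 \<or> y = 0")
  case True
  then have "out (c *\<^sub>R y) = 0" by (auto simp: out_zero)
  then show ?thesis using F_zero[OF A] by simp
next
  case False
  then have "c *\<^sub>R y \<noteq> 0" by simp
  show ?thesis
  proof (rule vanish[of _ i j "c^2"])
    show "\<forall>k. psd ((A(i := out (c *\<^sub>R y))) k)" using A by (simp add: psd_out)
  qed (use ij Aj False rank_out[OF \<open>c *\<^sub>R y \<noteq> 0\<close>] rank_out[of y] in \<open>auto simp: out_scale\<close>)
qed

lemma fv_colop:
  assumes ij: "i \<noteq> j"
  shows "fv (v(i := v i + t *\<^sub>R v j)) = fv v"
proof -
  define A where "A = (\<lambda>k. out (v k))"
  have A: "\<forall>k. psd (A k)" by (simp add: A_def psd_out)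
  define y where "y = t *\<^sub>R v j"
  define p where "p s = F (A(i := out (v i + s *\<^sub>R y)))" for s
  have par: "F (A(i := out (c *\<^sub>R y))) = 0" for c
    unfolding y_def using F_out_parallel[OF A _ ij, of "v j" "c * t"] by (simp add: A_def)
  have "p 1 = p 0"
  proof (rule jensen_const)
    fix s show "0 \<le> p s" unfolding p_def using A by (intro nonneg) (auto simp: psd_out)
  next
    fix s t
    let ?Z = "out (v i + s *\<^sub>R y)" and ?W = "out (t *\<^sub>R y)"
    have "p (s + t) + p (s - t) = F (A(i := out (v i + (s + t) *\<^sub>R y) + out (v i + (s - t) *\<^sub>R y)))"
      unfolding p_def using additive[OF A psd_out psd_out] by simp
    also have "\<dots> = F (A(i := (?Z + ?Z) + (?W + ?W)))" by (simp only: out_jensen_identity)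
    also have "\<dots> = F (A(i := ?Z + ?Z)) + F (A(i := ?W + ?W))"
      by (rule additive[OF A psd_add[OF psd_out psd_out] psd_add[OF psd_out psd_out]])
    also have "F (A(i := ?Z + ?Z)) = F (A(i := ?Z)) + F (A(i := ?Z))"
      by (rule additive[OF A psd_out psd_out])
    also have "F (A(i := ?W + ?W)) = F (A(i := ?W)) + F (A(i := ?W))"
      by (rule additive[OF A psd_out psd_out])
    also have "F (A(i := ?W)) = 0" by (rule par)
    finally have "p (s + t) + p (s - t) = F (A(i := ?Z)) + F (A(i := ?Z)) + (0 + 0)" .
    then show "p (s + t) + p (s - t) = 2 * p s" by (simp add: p_def)
  qed
  moreover have "p 0 = fv v" by (simp add: p_def fv_def A_def fun_upd_idem)
  moreover have "p 1 = fv (v(i := v i + t *\<^sub>R v j))"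
    unfolding p_def fv_def A_def y_def by (rule arg_cong[where f=F]) (auto simp: fun_eq_iff)
  ultimately show ?thesis by simp
qed

end



context Fctx begin

lemma outs_upd: "(\<lambda>k. out ((v(i := w)) k)) = (\<lambda>k. out (v k))(i := out w)"
  by (auto simp: fun_eq_iff)

lemma fv_upd: "fv (v(i := w)) = F ((\<lambda>k. out (v k))(i := out w))"
  unfolding fv_def outs_upd ..

lemma fv_scale: "fv (v(i := c *\<^sub>R v i)) = c^2 * fv v"
proof -
  have "fv (v(i := c *\<^sub>R v i)) = F ((\<lambda>k. out (v k))(i := c^2 *\<^sub>R out (v i)))"
    by (simp add: fv_upd out_scale)
  also have "\<dots> = c^2 * F ((\<lambda>k. out (v k))(i := out (v i)))"
    by (rule F_homog) (auto simp: psd_out)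
  also have "(\<lambda>k. out (v k))(i := out (v i)) = (\<lambda>k. out (v k))" by auto
  finally show ?thesis by (simp add: fv_def)
qed

lemma fv_zero: "fv (v(i := 0)) = 0"
  unfolding fv_upd out_zero by (rule F_zero) (simp add: psd_out)

lemma fv_swap:
  assumes mn: "m \<noteq> n"
  shows "fv (v(m := v n, n := v m)) = fv v"
proof -
  define w1 where "w1 = v(m := v m + 1 *\<^sub>R v n)"
  define w2 where "w2 = w1(n := w1 n + (-1) *\<^sub>R w1 m)"
  define w3 where "w3 = w2(m := w2 m + 1 *\<^sub>R w2 n)"
  have "fv w1 = fv v" unfolding w1_def using mn by (rule fv_colop)
  moreover have "fv w2 = fv w1" unfolding w2_def using mn by (intro fv_colop) auto
  moreover have "fv w3 = fv w2" unfolding w3_def using mn by (intro fv_colop) auto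
  moreover have w3: "w3 = v(m := v n, n := - v m)"
    using mn by (auto simp: w1_def w2_def w3_def fun_eq_iff)
  moreover have "fv (w3(n := (-1) *\<^sub>R w3 n)) = (-1)^2 * fv w3" by (rule fv_scale)
  moreover have "w3(n := (-1) *\<^sub>R w3 n) = v(m := v n, n := v m)"
    using mn by (auto simp: w3 fun_eq_iff)
  ultimately show ?thesis by simp
qed

lemma fv_addsum:
  assumes "finite S" "i \<notin> S"
  shows "fv (v(i := v i + (\<Sum>k\<in>S. d k *\<^sub>R v k))) = fv v"
  using assms
proof (induction S rule: finite_induct)
  case empty then show ?case by (simp add: fun_upd_idem)
next
  case (insert j S)
  define w where "w = v(i := v i + (\<Sum>k\<in>S. d k *\<^sub>R v k))"
  have ij: "i \<noteq> j" using insert by auto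
  have "v(i := v i + (\<Sum>k\<in>insert j S. d k *\<^sub>R v k)) = w(i := w i + d j *\<^sub>R w j)"
    using insert ij by (auto simp: w_def fun_eq_iff algebra_simps)
  moreover have "fv (w(i := w i + d j *\<^sub>R w j)) = fv w" using ij by (rule fv_colop)
  moreover have "fv w = fv v" unfolding w_def using insert by (simp add: fun_upd_def)
  ultimately show ?case by (simp only:)
qed

lemma fv_dep:
  fixes W :: "real^'n^'n"
  assumes "det W = 0"
  shows "fv (\<lambda>k. column k W) = 0"
proof -
  define v where "v = (\<lambda>k. column k W)"
  have "rank W \<noteq> CARD('n)" using assms det_eq_0_rank[of W] by simp
  then obtain x where x: "x \<noteq> 0" "W *v x = 0"
    using matrix_nonfull_linear_equations_eq[of W] by blast
  then obtain i where xi: "x$i \<noteq> 0" by (auto simp: vec_eq_iff)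
  have sum0: "(\<Sum>k\<in>UNIV. x$k *\<^sub>R v k) = 0"
    using x(2) unfolding matrix_mult_sum v_def by (simp add: scalar_mult_eq_scaleR)
  define d where "d k = x$k / x$i" for k
  have "v i + (\<Sum>k\<in>UNIV - {i}. d k *\<^sub>R v k) = (1 / x$i) *\<^sub>R (\<Sum>k\<in>UNIV. x$k *\<^sub>R v k)"
  proof -
    have "(\<Sum>k\<in>UNIV. x$k *\<^sub>R v k) = x$i *\<^sub>R v i + (\<Sum>k\<in>UNIV - {i}. x$k *\<^sub>R v k)"
      by (simp add: sum.remove)
    then show ?thesis using xi
      by (simp add: d_def scaleR_add_right scaleR_sum_right divide_inverse mult.commute)
  qed
  then have "v i + (\<Sum>k\<in>UNIV - {i}. d k *\<^sub>R v k) = 0" using sum0 by simp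
  then have "fv v = fv (v(i := 0))" using fv_addsum[of "UNIV - {i}" i v d] by simp
  then show ?thesis using fv_zero by (simp add: v_def)
qed

lemma fv_diag_gen:
  assumes "finite S"
  shows "fv (\<lambda>k. if k \<in> S then d k *\<^sub>R v k else v k) = (\<Prod>k\<in>S. d k)^2 * fv v"
  using assms
proof (induction S rule: finite_induct)
  case empty then show ?case by simp
next
  case (insert j S)
  define w where "w = (\<lambda>k. if k \<in> S then d k *\<^sub>R v k else v k)"
  have "(\<lambda>k. if k \<in> insert j S then d k *\<^sub>R v k else v k) = w(j := d j *\<^sub>R w j)"
    using insert by (auto simp: w_def fun_eq_iff)
  then have "fv (\<lambda>k. if k \<in> insert j S then d k *\<^sub>R v k else v k) = (d j)^2 * fv w"
    by (simp add: fv_scale)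
  then show ?case using insert by (simp add: w_def power_mult_distrib)
qed

lemma fv_diag: "fv (\<lambda>k. d k *\<^sub>R v k) = (\<Prod>k\<in>UNIV. d k)^2 * fv v"
  using fv_diag_gen[of UNIV d v] by simp

end



context Fctx begin

lemma fv_mult_elem:
  fixes A :: "real^'n^'n"
  shows "\<forall>V. fv (\<lambda>k. column k (V ** A)) = (det A)^2 * fv (\<lambda>k. column k V)"
proof (rule induct_matrix_elementary)
  fix A B :: "real^'n^'n"
  assume mA: "\<forall>V. fv (\<lambda>k. column k (V ** A)) = (det A)^2 * fv (\<lambda>k. column k V)"
    and mB: "\<forall>V. fv (\<lambda>k. column k (V ** B)) = (det B)^2 * fv (\<lambda>k. column k V)"
  show "\<forall>V. fv (\<lambda>k. column k (V ** (A ** B))) = (det (A ** B))^2 * fv (\<lambda>k. column k V)"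
  proof
    fix V :: "real^'n^'n"
    have "fv (\<lambda>k. column k (V ** (A ** B))) = fv (\<lambda>k. column k ((V ** A) ** B))"
      by (simp add: matrix_mul_assoc)
    also have "\<dots> = (det B)^2 * ((det A)^2 * fv (\<lambda>k. column k V))" using mA mB by simp
    finally show "fv (\<lambda>k. column k (V ** (A ** B))) = (det (A ** B))^2 * fv (\<lambda>k. column k V)"
      by (simp add: det_mul power_mult_distrib)
  qed
next
  fix A :: "real^'n^'n" and i assume "row i A = 0"
  then have dA: "det A = 0" by (rule det_zero_row)
  show "\<forall>V. fv (\<lambda>k. column k (V ** A)) = (det A)^2 * fv (\<lambda>k. column k V)"
  proof
    fix V :: "real^'n^'n"
    have "det (V ** A) = 0" by (simp add: det_mul dA)
    then show "fv (\<lambda>k. column k (V ** A)) = (det A)^2 * fv (\<lambda>k. column k V)"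
      by (simp add: fv_dep dA)
  qed
next
  fix A :: "real^'n^'n" assume diagonal: "\<And>i j. i \<noteq> j \<Longrightarrow> A$i$j = 0"
  show "\<forall>V. fv (\<lambda>k. column k (V ** A)) = (det A)^2 * fv (\<lambda>k. column k V)"
  proof
    fix V :: "real^'n^'n"
    have col: "column k (V ** A) = A$k$k *\<^sub>R column k V" for k
    proof -
      have "(\<Sum>j\<in>UNIV. V$r$j * A$j$k) = V$r$k * A$k$k" for r
      proof -
        have "(\<Sum>j\<in>UNIV. V$r$j * A$j$k) = (\<Sum>j\<in>UNIV. if j = k then V$r$k * A$k$k else 0)"
          by (rule sum.cong) (auto simp: diagonal)
        then show ?thesis by simp
      qed
      then show ?thesis by (simp add: column_def matrix_matrix_mult_def vec_eq_iff mult.commute)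
    qed
    show "fv (\<lambda>k. column k (V ** A)) = (det A)^2 * fv (\<lambda>k. column k V)"
      unfolding col fv_diag by (simp add: det_diagonal diagonal)
  qed
next
  fix m n :: 'n assume swap1: "m \<noteq> n"
  show "\<forall>V. fv (\<lambda>k. column k (V ** (\<chi> i j. mat 1 $ i $ Transposition.transpose m n j))) = (det (\<chi> i j. mat 1 $ i $ Transposition.transpose m n j :: real^'n^'n))^2 * fv (\<lambda>k. column k V)"
  proof
    fix V :: "real^'n^'n"
    let ?P = "(\<chi> i j. mat 1 $ i $ Transposition.transpose m n j) :: real^'n^'n"
    have col: "column k (V ** ?P) = column (Transposition.transpose m n k) V" for k
      by (simp add: column_def matrix_matrix_mult_def vec_eq_iff mat_def if_distrib[of "\<lambda>x. _ * x"] cong: if_cong)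
    have eqf: "(\<lambda>k. column k (V ** ?P)) = (\<lambda>k. column k V)(m := column n V, n := column m V)"
      unfolding col by (auto simp: fun_eq_iff)
    have "det ?P = of_int (sign (Transposition.transpose m n)) * det (mat 1 :: real^'n^'n)"
      by (rule det_permute_columns) (simp add: permutes_swap_id)
    then have dP: "det ?P = -1" using swap1 by (simp add: sign_swap_id)
    show "fv (\<lambda>k. column k (V ** ?P)) = (det ?P)^2 * fv (\<lambda>k. column k V)"
      unfolding eqf dP using fv_swap[OF swap1] by simp
  qed
next
  fix m n :: 'n and c :: real assume idplus: "m \<noteq> n"
  show "\<forall>V. fv (\<lambda>k. column k (V ** (\<chi> i j. if i = m \<and> j = n then c else of_bool (i = j)))) = (det (\<chi> i j. if i = m \<and> j = n then c else of_bool (i = j) :: real^'n^'n))^2 * fv (\<lambda>k. column k V)"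
  proof
    fix V :: "real^'n^'n"
    let ?E = "(\<chi> i j. if i = m \<and> j = n then c else of_bool (i = j)) :: real^'n^'n"
    have Ej: "?E$j$k = of_bool (j = k) + (if k = n then (if j = m then c else 0) else 0)" for j k
      using idplus by auto
    have col: "column k (V ** ?E) = column k V + (if k = n then c *\<^sub>R column m V else 0)" for k
    proof -
      have "(\<Sum>j\<in>UNIV. V$r$j * ?E$j$k) = V$r$k + (if k = n then c * V$r$m else 0)" for r
        unfolding Ej by (simp add: distrib_left sum.distrib of_bool_def if_distrib[of "\<lambda>x. _ * x"] cong: if_cong)
      then show ?thesis by (auto simp: column_def matrix_matrix_mult_def vec_eq_iff)
    qed
    have eqf: "(\<lambda>k. column k (V ** ?E)) = (\<lambda>k. column k V)(n := column n V + c *\<^sub>R column m V)"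
      unfolding col by (auto simp: fun_eq_iff)
    have "?E = (\<chi> k. if k = m then row m (mat 1) + c *s row n (mat 1) else row k (mat 1))"
      using idplus by (auto simp: vec_eq_iff row_def mat_def)
    then have dE: "det ?E = 1" using det_row_operation[OF idplus, of "mat 1" c] by simp
    have "fv ((\<lambda>k. column k V)(n := column n V + c *\<^sub>R column m V)) = fv (\<lambda>k. column k V)"
      using fv_colop[of n m "\<lambda>k. column k V" c] idplus by simp
    then show "fv (\<lambda>k. column k (V ** ?E)) = (det ?E)^2 * fv (\<lambda>k. column k V)"
      unfolding eqf dE by simp
  qed
qed

lemma fv_det: "fv (\<lambda>k. column k W) = (det W)^2 * fv (\<lambda>k. column k (mat 1 :: real^'n^'n))"
  using fv_mult_elem[of W] by (metis matrix_mul_lid)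

end



lemma md_out:
  fixes W :: "real^'n^'n"
  shows "mixed_discr (\<lambda>k. out (column k W)) = (det W)^2 / fact CARD('n)"
proof -
  have tm: "det (\<chi> i j. out (column (\<sigma> j) W) $ i $ j) =
      det W * (of_int (sign \<sigma>) * (\<Prod>j\<in>UNIV. W$j$(\<sigma> j)))"
    if s: "\<sigma> permutes (UNIV::'n set)" for \<sigma>
  proof -
    define M :: "real^'n^'n" where "M = (\<chi> i j. W$i$(\<sigma> j))"
    define Dg :: "real^'n^'n" where "Dg = (\<chi> i j. if i = j then W$j$(\<sigma> j) else 0)"
    have "(\<chi> i j. out (column (\<sigma> j) W) $ i $ j) = M ** Dg"
      by (simp add: M_def Dg_def out_def column_def matrix_matrix_mult_def vec_eq_iff
          if_distrib[of "\<lambda>x. _ * x"] cong: if_cong)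
    moreover have "det M = of_int (sign \<sigma>) * det W" unfolding M_def by (rule det_permute_columns[OF s])
    moreover have "det Dg = (\<Prod>j\<in>UNIV. W$j$(\<sigma> j))" unfolding Dg_def
      by (subst det_diagonal) auto
    ultimately show ?thesis by (simp add: det_mul)
  qed
  have "mixed_discr (\<lambda>k. out (column k W)) =
      (1 / fact CARD('n)) * (\<Sum>\<sigma> | \<sigma> permutes (UNIV::'n set). det W * (of_int (sign \<sigma>) * (\<Prod>j\<in>UNIV. W$j$(\<sigma> j))))"
    unfolding mixed_discr_def by (simp add: tm)
  also have "\<dots> = (1 / fact CARD('n)) * (det W * det W)"
    by (simp add: sum_distrib_left[symmetric] det_def)
  finally show ?thesis by (simp add: power2_eq_square)
qed

lemma md_term_add:
  fixes A :: "'n::finite \<Rightarrow> real^'n^'n"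
  assumes s: "\<sigma> permutes (UNIV::'n set)"
  shows "det (\<chi> r j. (A(i := B + B')) (\<sigma> j) $ r $ j) =
         det (\<chi> r j. (A(i := B)) (\<sigma> j) $ r $ j) + det (\<chi> r j. (A(i := B')) (\<sigma> j) $ r $ j)"
proof -
  define k where "k = inv \<sigma> i"
  have sk: "\<sigma> j = i \<longleftrightarrow> j = k" for j
    using s unfolding k_def by (metis permutes_inverses(1) permutes_inverses(2))
  have tr: "det (\<chi> r j. (A(i := X)) (\<sigma> j) $ r $ j) =
       det (\<chi> j. if j = k then (\<chi> r. X $ r $ j) else (\<chi> r. A (\<sigma> j) $ r $ j))" for X
  proof -
    have "det (\<chi> r j. (A(i := X)) (\<sigma> j) $ r $ j) = det (transpose (\<chi> r j. (A(i := X)) (\<sigma> j) $ r $ j))"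
      by simp
    also have "transpose (\<chi> r j. (A(i := X)) (\<sigma> j) $ r $ j) =
       (\<chi> j. if j = k then (\<chi> r. X $ r $ j) else (\<chi> r. A (\<sigma> j) $ r $ j))"
      by (auto simp: transpose_def vec_eq_iff sk)
    finally show ?thesis .
  qed
  have "(\<chi> j. if j = k then (\<chi> r. (B + B') $ r $ j) else (\<chi> r. A (\<sigma> j) $ r $ j)) =
        (\<chi> j. if j = k then (\<chi> r. B $ r $ j) + (\<chi> r. B' $ r $ j) else (\<chi> r. A (\<sigma> j) $ r $ j))"
    by (simp add: vec_eq_iff)
  then show ?thesis unfolding tr by (simp add: det_row_add)
qed

lemma md_add:
  fixes A :: "'n::finite \<Rightarrow> real^'n^'n"
  shows "mixed_discr (A(i := B + B')) = mixed_discr (A(i := B)) + mixed_discr (A(i := B'))"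
proof -
  have "(\<Sum>\<sigma> | \<sigma> permutes (UNIV::'n set). det (\<chi> r j. (A(i := B + B')) (\<sigma> j) $ r $ j)) =
    (\<Sum>\<sigma> | \<sigma> permutes (UNIV::'n set). det (\<chi> r j. (A(i := B)) (\<sigma> j) $ r $ j) + det (\<chi> r j. (A(i := B')) (\<sigma> j) $ r $ j))"
    by (rule sum.cong) (simp_all only: mem_Collect_eq md_term_add)
  then show ?thesis unfolding mixed_discr_def by (simp add: sum.distrib distrib_left)
qed

lemma md_zero:
  fixes A :: "'n::finite \<Rightarrow> real^'n^'n"
  shows "mixed_discr (A(i := 0)) = 0"
  using md_add[of A i 0 0] by simp




lemma psd_diag_nonneg: "psd M \<Longrightarrow> 0 \<le> M$p$p"
proof -
  assume "psd M"
  then have "0 \<le> axis p 1 \<bullet> (M *v axis p 1)" unfolding psd_def by blast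
  also have "axis p 1 \<bullet> (M *v axis p 1) = M$p$p"
    by (simp add: matrix_vector_mult_basis inner_commute[of "axis p 1"] inner_axis column_def)
  finally show ?thesis .
qed

lemma abs_sgn_real: "\<bar>x\<bar> * sgn x = (x::real)"
  by (cases "x < 0") (auto simp: sgn_real_def)

lemma dsum:
  fixes g :: "'n::finite \<Rightarrow> 'n \<Rightarrow> real"
  shows "(\<Sum>p\<in>UNIV. \<Sum>q\<in>UNIV. if a = p then if b = q then g p q else 0 else 0) = g a b"
proof -
  have "(\<Sum>q\<in>UNIV. if a = p then if b = q then g p q else 0 else 0) = (if a = p then g p b else 0)" for p
    by (cases "a = p") simp_all
  then show ?thesis by simp
qed

lemma sum_out_entry: "(\<Sum>k\<in>K. out (u k)) $ r $ c = (\<Sum>k\<in>K. u k $ r * u k $ c)"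
  by (simp add: out_def)

lemma psd_decomp:
  fixes M :: "real^'n^'n"
  assumes M: "psd M"
  defines "s \<equiv> \<lambda>p q. sgn (M$p$q)"
  defines "kk \<equiv> \<lambda>p q. if p = q then 0 else sqrt (\<bar>M$p$q\<bar> / 4)"
  defines "u \<equiv> \<lambda>p q. (\<chi> t. kk p q * (of_bool (t = p) - s p q * of_bool (t = q))) :: real^'n"
  defines "w \<equiv> \<lambda>p q. (\<chi> t. kk p q * (of_bool (t = p) + s p q * of_bool (t = q))) :: real^'n"
  defines "d \<equiv> \<lambda>p. (\<chi> t. sqrt (M$p$p) * of_bool (t = p)) :: real^'n"
  shows "M + (\<Sum>p\<in>UNIV. \<Sum>q\<in>UNIV. out (u p q)) = (\<Sum>p\<in>UNIV. out (d p)) + (\<Sum>p\<in>UNIV. \<Sum>q\<in>UNIV. out (w p q))"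
proof -
  have symM: "M$p$q = M$q$p" for p q
    using M unfolding psd_def by (metis transpose_def vec_lambda_beta)
  define g where "g p q = (if p = q then 0 else M$p$q / 2)" for p q
  have kk2: "2 * (kk p q)^2 * s p q = g p q" for p q
    by (simp add: kk_def s_def g_def abs_sgn_real)
  have pt: "w p q $ r * w p q $ c - u p q $ r * u p q $ c =
      g p q * (of_bool (r = p) * of_bool (c = q) + of_bool (r = q) * of_bool (c = p))" for p q r c
  proof -
    have "w p q $ r * w p q $ c - u p q $ r * u p q $ c =
        2 * (kk p q)^2 * s p q * (of_bool (r = p) * of_bool (c = q) + of_bool (r = q) * of_bool (c = p))"
      by (simp add: u_def w_def power2_eq_square algebra_simps)
    then show ?thesis by (simp only: kk2)
  qed
  have entry: "M$r$c + (\<Sum>p\<in>UNIV. \<Sum>q\<in>UNIV. u p q $ r * u p q $ c) =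
      (\<Sum>p\<in>UNIV. d p $ r * d p $ c) + (\<Sum>p\<in>UNIV. \<Sum>q\<in>UNIV. w p q $ r * w p q $ c)" for r c
  proof -
    have "(\<Sum>p\<in>UNIV. \<Sum>q\<in>UNIV. w p q $ r * w p q $ c) - (\<Sum>p\<in>UNIV. \<Sum>q\<in>UNIV. u p q $ r * u p q $ c)
        = (\<Sum>p\<in>UNIV. \<Sum>q\<in>UNIV. g p q * (of_bool (r = p) * of_bool (c = q) + of_bool (r = q) * of_bool (c = p)))"
      by (simp add: sum_subtractf[symmetric] pt)
    also have "\<dots> = g r c + g c r"
      by (simp add: distrib_left sum.distrib of_bool_def if_distrib[of "\<lambda>x. _ * x"] dsum cong: if_cong)
    also have "\<dots> = (if r = c then 0 else M$r$c)" by (simp add: g_def symM[of c r])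
    finally have 1: "(\<Sum>p\<in>UNIV. \<Sum>q\<in>UNIV. w p q $ r * w p q $ c) - (\<Sum>p\<in>UNIV. \<Sum>q\<in>UNIV. u p q $ r * u p q $ c)
        = (if r = c then 0 else M$r$c)" .
    have 2: "(\<Sum>p\<in>UNIV. d p $ r * d p $ c) = (if r = c then M$r$r else 0)"
      using psd_diag_nonneg[OF M] by (simp add: d_def of_bool_def if_distrib[of "\<lambda>x. _ * x"] cong: if_cong)
    show ?thesis using 1 2 by (cases "r = c") auto
  qed
  show ?thesis
    using entry by (simp add: vec_eq_iff out_def)
qed




lemma psd_sum: "finite K \<Longrightarrow> (\<And>k. k \<in> K \<Longrightarrow> psd (X k)) \<Longrightarrow> psd (\<Sum>k\<in>K. X k)"
  by (induction K rule: finite_induct) (auto intro: psd_add psd_zero)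

lemma psd_decomp_ex:
  fixes M :: "real^'n^'n"
  assumes "psd M"
  shows "\<exists>(u::'n\<Rightarrow>'n\<Rightarrow>real^'n) (d::'n\<Rightarrow>real^'n) (w::'n\<Rightarrow>'n\<Rightarrow>real^'n). M + (\<Sum>p\<in>UNIV. \<Sum>q\<in>UNIV. out (u p q)) = (\<Sum>p\<in>UNIV. out (d p)) + (\<Sum>p\<in>UNIV. \<Sum>q\<in>UNIV. out (w p q))"
  by (intro exI) (rule psd_decomp[OF assms])

context Fctx begin

definition c0 :: real where "c0 = fv (\<lambda>k. column k (mat 1 :: real^'n^'n))"
definition aa :: real where "aa = fact CARD('n) * c0"
definition H :: "('n \<Rightarrow> real^'n^'n) \<Rightarrow> real" where "H A = F A - aa * mixed_discr A"

lemma c0_nonneg: "0 \<le> c0"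
  unfolding c0_def fv_def by (rule nonneg) (simp add: psd_out)

lemma H_add: "\<forall>k. psd (A k) \<Longrightarrow> psd B \<Longrightarrow> psd B' \<Longrightarrow> H (A(i := B + B')) = H (A(i := B)) + H (A(i := B'))"
  unfolding H_def using additive[of A B B' i] md_add[of A i B B'] by (simp add: algebra_simps)

lemma H_out: "H (\<lambda>k. out (v k)) = 0"
proof -
  define W :: "real^'n^'n" where "W = (\<chi> r k. v k $ r)"
  have cw: "(\<lambda>k. column k W) = v" by (simp add: W_def column_def fun_eq_iff vec_eq_iff)
  have colk: "column k W = v k" for k by (simp add: W_def column_def vec_eq_iff)
  have "F (\<lambda>k. out (v k)) = (det W)^2 * c0" using fv_det[of W] by (simp add: cw fv_def c0_def)
  moreover have "mixed_discr (\<lambda>k. out (v k)) = (det W)^2 / fact CARD('n)" using md_out[of W] by (simp add: colk)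
  ultimately show ?thesis by (simp add: H_def aa_def)
qed

lemma H_zero: "\<forall>k. psd (A k) \<Longrightarrow> H (A(i := 0)) = 0"
  using H_add[of A 0 0 i] psd_zero by simp

lemma H_sum:
  assumes A: "\<forall>k. psd (A k)" and K: "finite K" and X: "\<And>k. k \<in> K \<Longrightarrow> psd (X k)"
  shows "H (A(i := (\<Sum>k\<in>K. X k))) = (\<Sum>k\<in>K. H (A(i := X k)))"
  using K X
proof (induction K rule: finite_induct)
  case empty
  have "H (A(i := 0)) = 0" by (rule H_zero[OF A])
  then show ?case by (simp only: sum.empty)
next
  case (insert j K)
  have "H (A(i := (\<Sum>k\<in>insert j K. X k))) = H (A(i := X j + (\<Sum>k\<in>K. X k)))"
    using insert by simp
  also have "\<dots> = H (A(i := X j)) + H (A(i := (\<Sum>k\<in>K. X k)))"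
    using insert by (intro H_add A psd_sum) auto
  also have "H (A(i := (\<Sum>k\<in>K. X k))) = (\<Sum>k\<in>K. H (A(i := X k)))"
    by (rule insert.IH) (simp add: insert.prems)
  also have "H (A(i := X j)) + (\<Sum>k\<in>K. H (A(i := X k))) = (\<Sum>k\<in>insert j K. H (A(i := X k)))"
    by (simp only: sum.insert[OF insert.hyps])
  finally show ?case .
qed

lemma H_vanish_gen:
  assumes "finite S"
  shows "\<forall>A. (\<forall>k. psd (A k)) \<and> (\<forall>k. k \<notin> S \<longrightarrow> (\<exists>x. A k = out x)) \<longrightarrow> H A = 0"
  using assms
proof (induction S rule: finite_induct)
  case empty
  show ?case
  proof (intro allI impI)
    fix A :: "'n \<Rightarrow> real^'n^'n"
    assume "(\<forall>k. psd (A k)) \<and> (\<forall>k. k \<notin> {} \<longrightarrow> (\<exists>x. A k = out x))"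
    then have "\<forall>k. \<exists>x. A k = out x" by simp
    then obtain x where "\<forall>k. A k = out (x k)" by metis
    then have "A = (\<lambda>k. out (x k))" by auto
    then show "H A = 0" by (simp add: H_out)
  qed
next
  case (insert i S)
  show ?case
  proof (intro allI impI)
    fix A :: "'n \<Rightarrow> real^'n^'n"
    assume asm: "(\<forall>k. psd (A k)) \<and> (\<forall>k. k \<notin> insert i S \<longrightarrow> (\<exists>x. A k = out x))"
    then have A: "\<forall>k. psd (A k)" by simp
    have IH: "H (A(i := out y)) = 0" for y
    proof -
      have "(\<forall>k. psd ((A(i := out y)) k)) \<and> (\<forall>k. k \<notin> S \<longrightarrow> (\<exists>x. (A(i := out y)) k = out x))"
      proof (intro conjI allI impI)
        fix k show "psd ((A(i := out y)) k)" using A by (simp add: psd_out)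
      next
        fix k assume "k \<notin> S"
        show "\<exists>x. (A(i := out y)) k = out x"
        proof (cases "k = i")
          case True then show ?thesis by auto
        next
          case False then show ?thesis using asm \<open>k \<notin> S\<close> by auto
        qed
      qed
      then show ?thesis using insert.IH by blast
    qed
    obtain u :: "'n \<Rightarrow> 'n \<Rightarrow> real^'n" and d :: "'n \<Rightarrow> real^'n" and w :: "'n \<Rightarrow> 'n \<Rightarrow> real^'n" where dec: "A i + (\<Sum>p\<in>UNIV. \<Sum>q\<in>UNIV. out (u p q)) =
        (\<Sum>p\<in>UNIV. out (d p)) + (\<Sum>p\<in>UNIV. \<Sum>q\<in>UNIV. out (w p q))"
      using psd_decomp_ex[of "A i"] A by blast
    have Hs: "H (A(i := (\<Sum>p\<in>UNIV. \<Sum>q\<in>UNIV. out (z p q)))) = 0" for z :: "'n \<Rightarrow> 'n \<Rightarrow> real^'n"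
    proof -
      have "H (A(i := (\<Sum>p\<in>UNIV. \<Sum>q\<in>UNIV. out (z p q)))) = (\<Sum>p\<in>UNIV. H (A(i := (\<Sum>q\<in>UNIV. out (z p q)))))"
        using A by (intro H_sum psd_sum) (auto simp: psd_out)
      also have "\<dots> = (\<Sum>p\<in>UNIV. \<Sum>q\<in>UNIV. H (A(i := out (z p q))))"
        using A by (intro sum.cong refl H_sum) (auto simp: psd_out)
      finally show ?thesis by (simp add: IH)
    qed
    have Hd: "H (A(i := (\<Sum>p\<in>UNIV. out (d p)))) = 0"
      using A by (subst H_sum) (auto simp: psd_out IH)
    have psdU: "psd (\<Sum>p\<in>UNIV. \<Sum>q\<in>UNIV. out (z p q))" for z :: "'n \<Rightarrow> 'n \<Rightarrow> real^'n"
      by (intro psd_sum) (auto simp: psd_out)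
    have psdD: "psd (\<Sum>p\<in>UNIV. out (d p))" by (intro psd_sum) (auto simp: psd_out)
    have "H (A(i := A i + (\<Sum>p\<in>UNIV. \<Sum>q\<in>UNIV. out (u p q)))) = H (A(i := A i)) + 0"
      using H_add[OF A _ psdU, of "A i" i u] A Hs[of u] by simp
    moreover have "H (A(i := A i + (\<Sum>p\<in>UNIV. \<Sum>q\<in>UNIV. out (u p q)))) = 0"
      unfolding dec using H_add[OF A psdD psdU, of i w] Hd Hs[of w] by simp
    ultimately show "H A = 0" by simp
  qed
qed

lemma main: "\<forall>A. (\<forall>i. psd (A i)) \<longrightarrow> F A = aa * mixed_discr A"
  using H_vanish_gen[of UNIV] by (auto simp: H_def)

lemma aa_nonneg: "0 \<le> aa" unfolding aa_def using c0_nonneg by simp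

end

theorem theorem2:
  fixes F :: "('n::finite \<Rightarrow> real^'n^'n) \<Rightarrow> real"
  assumes nonneg: "\<And>A. (\<forall>i. psd (A i)) \<Longrightarrow> 0 \<le> F A"
    and additive: "\<And>A i B B'. (\<forall>k. psd (A k)) \<Longrightarrow> psd B \<Longrightarrow> psd B' \<Longrightarrow>
        F (A(i := B + B')) = F (A(i := B)) + F (A(i := B'))"
    and vanish: "\<And>A i j c. (\<forall>k. psd (A k)) \<Longrightarrow> i \<noteq> j \<Longrightarrow> rank (A i) = 1 \<Longrightarrow>
        rank (A j) = 1 \<Longrightarrow> A i = c *\<^sub>R A j \<Longrightarrow> F A = 0"
  shows "\<exists>a\<ge>0. \<forall>A. (\<forall>i. psd (A i)) \<longrightarrow> F A = a * mixed_discr A"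
proof -
  interpret Fctx F using assms by unfold_locales
  show ?thesis using main aa_nonneg by blast
qed



end
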